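(* Let $\lambda<\kappa$ be infinite cardinals with $\kappa\le\aleph_\omega$. Then every $(\lambda,\kappa)$-graph contains an $(\aleph_0,\kappa)$-subgraph.
   Context: For infinite cardinals $\lambda<\kappa$, a $(\lambda,\kappa)$-graph is a bipartite graph with bipartition $(A,B)$, $|A|=\lambda$, $|B|=\kappa$, in which every vertex $b\in B$ has infinitely many neighbours in $A$. An $(\aleph_0,\kappa)$-subgraph of such a graph is a subgraph with bipartition $(C,D)$, $C\subseteq A$, $D\subseteq B$, which is itself an $(\aleph_0,\kappa)$-graph. *)

theory Defs
  imports Main
begin

unbundle cardinal_syntax

text \<open>Cardinals are represented by sets via the library's card_of (|A|) with
ordLeq, ordLess, ordIso (\<le>o, <o, =o); natLeq is aleph_0.\<close>

primrec is_aleph :: "nat \<Rightarrow> 'a set \<Rightarrow> bool" where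
  "is_aleph 0 A \<longleftrightarrow> |A| =o natLeq"
| "is_aleph (Suc n) A \<longleftrightarrow> (\<exists>C. C \<subseteq> A \<and> is_aleph n C \<and> |A| =o cardSuc |C| )"

text \<open>is_aleph_omega A: A has cardinality aleph_omega, the least cardinal
above all aleph_n: A contains subsets of every size aleph_n, and every
strictly smaller cardinality is bounded by some aleph_n.\<close>
definition is_aleph_omega :: "'a set \<Rightarrow> bool" where
  "is_aleph_omega A \<longleftrightarrow>
     (\<forall>n. \<exists>D. D \<subseteq> A \<and> is_aleph n D) \<and>
     (\<forall>C. C \<subseteq> A \<and> |C| <o |A| \<longrightarrow> (\<exists>n D. D \<subseteq> A \<and> is_aleph n D \<and> |C| \<le>o |D| ))"

definition card_le_aleph_omega :: "'a set \<Rightarrow> bool" where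
  "card_le_aleph_omega A \<longleftrightarrow> (\<exists>n. is_aleph n A) \<or> is_aleph_omega A"

text \<open>Together with the cardinality
conditions |A| = \<lambda>, |B| = \<kappa> this is a (\<lambda>,\<kappa>)-graph.\<close>
definition inf_nbr_bigraph :: "('a \<times> 'b) set \<Rightarrow> 'a set \<Rightarrow> 'b set \<Rightarrow> bool" where
  "inf_nbr_bigraph E A B \<longleftrightarrow>
     E \<subseteq> A \<times> B \<and> (\<forall>b\<in>B. infinite {a \<in> A. (a, b) \<in> E})"

end

theory Submission imports Defs begin

definition nice :: "'a set \<Rightarrow> bool" where
  "nice A \<longleftrightarrow> (\<forall>X. X \<subseteq> A \<and> infinite X \<longrightarrow> stable |X| )"

lemma stable_of_natLeq: "|X| =o natLeq \<Longrightarrow> stable |X|"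
  using stable_natLeq stable_ordIso1 by blast

lemma aleph_basic: "is_aleph n X \<Longrightarrow> infinite X \<and> stable |X|"
proof (induction n arbitrary: X)
  case 0
  then show ?case using stable_of_natLeq infinite_iff_natLeq_ordLeq ordIso_iff_ordLeq by auto
next
  case (Suc n)
  then obtain C where C: "C \<subseteq> X" "is_aleph n C" "|X| =o cardSuc |C|" by auto
  have Ci: "infinite C" "stable |C|" using Suc.IH C(2) by auto
  have CI: "Cinfinite |C|" using Ci by (simp add: cinfinite_def card_of_card_order_on Field_card_of)
  have "Cinfinite (cardSuc |C| )" using Cinfinite_cardSuc[OF CI] .
  moreover have "regularCard (cardSuc |C| )" using regularCard_cardSuc[OF CI] .
  ultimately have "stable (cardSuc |C| )" using regularCard_stable cinfinite_def by blast
  hence "stable |X|" using C(3) stable_ordIso1 by blast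
  moreover have "infinite X" using C(1) Ci(1) finite_subset by blast
  ultimately show ?case by blast
qed

lemma aleph_sub_stable: "is_aleph n X \<Longrightarrow> Y \<subseteq> X \<Longrightarrow> infinite Y \<Longrightarrow> stable |Y|"
proof (induction n arbitrary: X Y)
  case 0
  hence "|Y| \<le>o natLeq" using card_of_mono1 ordLeq_ordIso_trans by fastforce
  moreover have "natLeq \<le>o |Y|" using 0 infinite_iff_natLeq_ordLeq by blast
  ultimately show ?case using stable_of_natLeq ordIso_iff_ordLeq by blast
next
  case (Suc n)
  then obtain C where C: "C \<subseteq> X" "is_aleph n C" "|X| =o cardSuc |C|" by auto
  show ?case
  proof (cases "|Y| =o |X|")
    case True
    have "stable |X|" using aleph_basic[OF Suc.prems(1)] by blast
    then show ?thesis using stable_ordIso1[OF _ True] by blast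
  next
    case False
    have "|Y| \<le>o |X|" using card_of_mono1[OF Suc.prems(2)] .
    hence "|Y| <o |X|" using False ordLeq_iff_ordLess_or_ordIso by blast
    hence "|Y| <o cardSuc |C|" using ordLess_ordIso_trans[OF _ C(3)] by blast
    hence "|Y| \<le>o |C|" by (simp add: cardSuc_ordLeq_ordLess card_of_Card_order)
    then obtain f where f: "inj_on f Y" "f ` Y \<subseteq> C" using card_of_ordLeq[of Y C] by blast
    have "bij_betw f Y (f ` Y)" using f(1) by (rule inj_on_imp_bij_betw)
    hence i: "|Y| =o |f ` Y|" using card_of_ordIso[of Y "f ` Y"] by blast
    have "infinite (f ` Y)" using f(1) Suc.prems(3) finite_imageD by blast
    hence "stable |f ` Y|" using Suc.IH[OF C(2) f(2)] by blast
    thus ?thesis using stable_ordIso1[OF _ i] by blast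
  qed
qed

lemma nice_aleph: "is_aleph n X \<Longrightarrow> nice X"
  unfolding nice_def
proof (intro allI impI)
  fix Y assume "is_aleph n X" "Y \<subseteq> X \<and> infinite Y"
  thus "stable |Y|" using aleph_sub_stable[of n X Y] by blast
qed

lemma nice_transfer: "|A| \<le>o |X| \<Longrightarrow> nice X \<Longrightarrow> nice A"
  unfolding nice_def
proof (intro allI impI)
  fix Z assume h: "|A| \<le>o |X|" "\<forall>Y. Y \<subseteq> X \<and> infinite Y \<longrightarrow> stable |Y|" "Z \<subseteq> A \<and> infinite Z"
  obtain f where f: "inj_on f A" "f ` A \<subseteq> X" using card_of_ordLeq[of A X] h(1) by blast
  have fz: "inj_on f Z" using f(1) h(3) inj_on_subset by blast
  have "bij_betw f Z (f ` Z)" using fz by (rule inj_on_imp_bij_betw)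
  hence i: "|Z| =o |f ` Z|" using card_of_ordIso[of Z "f ` Z"] by blast
  have "infinite (f ` Z)" using fz h(3) finite_imageD by blast
  moreover have "f ` Z \<subseteq> X" using f(2) h(3) by blast
  ultimately have "stable |f ` Z|" using h(2) by blast
  thus "stable |Z|" using stable_ordIso1[OF _ i] by blast
qed

lemma aleph_iso: "is_aleph n X \<Longrightarrow> is_aleph n Y \<Longrightarrow> |X| =o |Y|"
proof (induction n arbitrary: X Y)
  case 0
  hence a: "|X| =o natLeq" and b: "|Y| =o natLeq" by simp_all
  show ?case by (rule ordIso_transitive[OF a ordIso_symmetric[OF b]])
next
  case (Suc n)
  then obtain C C' where C: "is_aleph n C" "|X| =o cardSuc |C|" "is_aleph n C'" "|Y| =o cardSuc |C'|" "C \<subseteq> X" "C' \<subseteq> Y" by auto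
  have "|C| =o |C'|" using Suc.IH[OF C(1) C(3)] .
  hence i: "cardSuc |C| =o cardSuc |C'|" using cardSuc_invar_ordIso[OF card_of_Card_order card_of_Card_order] by blast
  show ?case by (rule ordIso_transitive[OF ordIso_transitive[OF C(2) i] ordIso_symmetric[OF C(4)]])
qed

lemma aleph_le: "is_aleph m X \<Longrightarrow> is_aleph n Y \<Longrightarrow> m \<le> n \<Longrightarrow> |X| \<le>o |Y|"
proof (induction n arbitrary: Y)
  case 0
  hence "is_aleph 0 X" by simp
  hence "|X| =o |Y|" using aleph_iso[of 0 X Y] 0 by blast
  then show ?case using ordIso_iff_ordLeq by blast
next
  case (Suc k)
  show ?case
  proof (cases "m = Suc k")
    case True
    hence "is_aleph (Suc k) X" using Suc.prems by simp
    hence "|X| =o |Y|" using aleph_iso[of "Suc k" X Y] Suc.prems by blast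
    then show ?thesis using ordIso_iff_ordLeq by blast
  next
    case False
    hence "m \<le> k" using Suc.prems by auto
    obtain C where C: "is_aleph k C" "|Y| =o cardSuc |C|" "C \<subseteq> Y" using Suc.prems by auto
    have a: "|X| \<le>o |C|" using Suc.IH[OF Suc.prems(1) C(1)] \<open>m \<le> k\<close> by blast
    have b: "|C| \<le>o cardSuc |C|" using cardSuc_ordLeq card_of_Card_order by blast
    have c: "cardSuc |C| \<le>o |Y|" using C(2) ordIso_iff_ordLeq by blast
    show ?thesis by (rule ordLeq_transitive[OF ordLeq_transitive[OF a b] c])
  qed
qed

lemma aleph_less: "is_aleph m X \<Longrightarrow> is_aleph n Y \<Longrightarrow> m < n \<Longrightarrow> |X| <o |Y|"
proof -
  assume h: "is_aleph m X" "is_aleph n Y" "m < n"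
  define k where "k = n - 1"
  have k: "n = Suc k" "m \<le> k" using h(3) unfolding k_def by auto
  have "is_aleph (Suc k) Y" using h(2) k(1) by simp
  then obtain C where C: "is_aleph k C" "|Y| =o cardSuc |C|" "C \<subseteq> Y" by auto
  have a: "|X| \<le>o |C|" using aleph_le[OF h(1) C(1) k(2)] .
  have b: "|C| <o cardSuc |C|" by (rule cardSuc_greater[OF card_of_Card_order])
  have c: "cardSuc |C| =o |Y|" by (rule ordIso_symmetric[OF C(2)])
  show ?thesis by (rule ordLess_ordIso_trans[OF ordLeq_ordLess_trans[OF a b] c])
qed


lemma countable_sub:
  assumes "infinite S"
  shows "\<exists>M. M \<subseteq> S \<and> |M| =o natLeq"
proof -
  obtain f :: "nat \<Rightarrow> _" where f: "inj f" "range f \<subseteq> S" using infinite_countable_subset[OF assms] by blast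
  have "bij_betw f UNIV (range f)" using f(1) by (rule inj_on_imp_bij_betw)
  hence "|UNIV::nat set| =o |range f|" using card_of_ordIso by blast
  hence "|range f| =o |UNIV::nat set|" by (rule ordIso_symmetric)
  hence "|range f| =o natLeq" by (rule ordIso_transitive[OF _ card_of_nat])
  thus ?thesis using f(2) by blast
qed

lemma card_trans_antisym: "trans |A| \<and> antisym |A|"
  using card_of_Well_order[of A]
  unfolding well_order_on_def linear_order_on_def partial_order_on_def preorder_on_def by blast

lemma reg_step:
  fixes r :: "'a rel" and A :: "'a set" and B :: "'b set"
  assumes IH: "\<And>r'::'a rel. r' <o r \<Longrightarrow> \<forall>A::'a set. |A| =o r' \<longrightarrow> (\<forall>(B::'b set) E. infinite A \<longrightarrow> nice A \<longrightarrow> stable |B| \<longrightarrow> |A| <o |B| \<longrightarrow> inf_nbr_bigraph E A B \<longrightarrow>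
      (\<exists>C D F. C \<subseteq> A \<and> D \<subseteq> B \<and> F \<subseteq> E \<and> |C| =o natLeq \<and> |D| =o |B| \<and> inf_nbr_bigraph F C D))"
  and Ar: "|A| =o r" and Ai: "infinite A" and An: "nice A" and Bs: "stable |B|" and AB: "|A| <o |B|"
  and G: "inf_nbr_bigraph E A B"
  shows "\<exists>C D F. C \<subseteq> A \<and> D \<subseteq> B \<and> F \<subseteq> E \<and> |C| =o natLeq \<and> |D| =o |B| \<and> inf_nbr_bigraph F C D"
proof (cases "|A| =o natLeq")
  case True
  have "A \<subseteq> A" "B \<subseteq> B" "E \<subseteq> E" "|B| =o |B|" by (auto simp: card_of_refl)
  thus ?thesis using G True by blast
next
  case False
  have "natLeq \<le>o |A|" using Ai infinite_iff_natLeq_ordLeq by blast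
  hence "natLeq <o |A| \<or> natLeq =o |A|" using ordLeq_iff_ordLess_or_ordIso by blast
  hence natA: "natLeq <o |A|" using False ordIso_symmetric by blast
  let ?R = "|A|"
  have RC: "Card_order ?R" by (rule card_of_Card_order)
  have RF: "Field ?R = A" by (rule Field_card_of)
  have RFi: "\<not> finite (Field ?R)" using Ai RF by simp
  have Rst: "stable ?R" using An Ai unfolding nice_def by (meson order_refl)
  have Rreg: "regularCard ?R" by (rule stable_regularCard[OF RC RFi Rst])
  have chain: "relChain ?R (underS ?R)"
    unfolding relChain_def
  proof (intro allI impI)
    fix i j assume "(i,j) \<in> ?R"
    thus "underS ?R i \<subseteq> underS ?R j" using underS_incr[of ?R i j] card_trans_antisym[of A] by blast
  qed
  have cover: "A \<subseteq> (\<Union>i \<in> Field ?R. underS ?R i)"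
  proof
    fix x assume x: "x \<in> A"
    have "x \<in> Field ?R" using x RF by simp
    then obtain b where "b \<in> Field ?R" "x \<noteq> b" "(x,b) \<in> ?R"
      using infinite_Card_order_limit[OF RC RFi] by blast
    thus "x \<in> (\<Union>i \<in> Field ?R. underS ?R i)" unfolding underS_def by blast
  qed
  have ex: "\<forall>b\<in>B. \<exists>p. fst p \<in> A \<and> snd p \<subseteq> underS ?R (fst p) \<and> snd p \<subseteq> {a \<in> A. (a, b) \<in> E} \<and> infinite (snd p)"
  proof
    fix b assume b: "b \<in> B"
    have "infinite {a \<in> A. (a, b) \<in> E}" using G b unfolding inf_nbr_bigraph_def by blast
    then obtain M where M: "M \<subseteq> {a \<in> A. (a, b) \<in> E}" "|M| =o natLeq" using countable_sub by blast
    have "natLeq \<le>o |M|" using M(2) ordIso_iff_ordLeq by auto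
    hence Mi: "infinite M" using infinite_iff_natLeq_ordLeq[of M] by blast
    have Ml: "|M| <o ?R" by (rule ordIso_ordLess_trans[OF M(2) natA])
    have Ms: "M \<subseteq> (\<Union>i \<in> Field ?R. underS ?R i)" using M(1) cover by blast
    obtain i where "i \<in> Field ?R" "M \<subseteq> underS ?R i"
      using regularCard_UNION[OF RC Rreg chain Ms Ml] by blast
    hence "fst (i, M) \<in> A \<and> snd (i, M) \<subseteq> underS ?R (fst (i, M)) \<and> snd (i, M) \<subseteq> {a \<in> A. (a, b) \<in> E} \<and> infinite (snd (i, M))"
      using M(1) Mi RF by simp
    thus "\<exists>p. fst p \<in> A \<and> snd p \<subseteq> underS ?R (fst p) \<and> snd p \<subseteq> {a \<in> A. (a, b) \<in> E} \<and> infinite (snd p)"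
      by (rule exI)
  qed
  obtain hp where hp: "\<forall>b\<in>B. fst (hp b) \<in> A \<and> snd (hp b) \<subseteq> underS ?R (fst (hp b)) \<and> snd (hp b) \<subseteq> {a \<in> A. (a, b) \<in> E} \<and> infinite (snd (hp b))"
    using bchoice[OF ex] by (elim exE) blast
  define g where "g b = fst (hp b)" for b
  define Mf where "Mf b = snd (hp b)" for b
  have gM: "\<And>b. b \<in> B \<Longrightarrow> g b \<in> A \<and> Mf b \<subseteq> underS ?R (g b) \<and> Mf b \<subseteq> {a \<in> A. (a, b) \<in> E} \<and> infinite (Mf b)"
    unfolding g_def Mf_def by (rule bspec[OF hp])
  have "\<exists>a\<in>A. \<not> |{b\<in>B. g b = a}| <o |B|"
  proof (rule ccontr)
    assume "\<not> ?thesis"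
    hence "\<And>a. a \<in> A \<Longrightarrow> |{b\<in>B. g b = a}| <o |B|" by blast
    hence "|\<Union>a\<in>A. {b\<in>B. g b = a}| <o |B|" by (rule stable_UNION[OF Bs AB])
    moreover have "(\<Union>a\<in>A. {b\<in>B. g b = a}) = B" using gM by blast
    ultimately have "|B| <o |B|" by simp
    thus False using ordLess_irreflexive by blast
  qed
  then obtain a where a: "a \<in> A" "\<not> |{b\<in>B. g b = a}| <o |B|" by blast
  define Da where "Da = {b\<in>B. g b = a}"
  define A' where "A' = underS ?R a"
  define E' where "E' = E \<inter> (A' \<times> Da)"
  have DaB: "Da \<subseteq> B" unfolding Da_def by blast
  have "|B| \<le>o |Da|" using a(2) not_ordLess_iff_ordLeq card_of_Well_order unfolding Da_def by blast
  moreover have "|Da| \<le>o |B|" by (rule card_of_mono1[OF DaB])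
  ultimately have DaIso: "|Da| =o |B|" using ordIso_iff_ordLeq by blast
  have A'A: "|A'| <o |A|" unfolding A'_def using card_of_underS[OF RC] a(1) RF by blast
  have A'r: "|A'| <o r" using ordLess_ordIso_trans[OF A'A Ar] .
  have A'sub: "A' \<subseteq> A" unfolding A'_def underS_def using RF Field_def by fastforce
  have "B \<noteq> {}"
  proof
    assume "B = {}"
    hence "|B| \<le>o |A|" using card_of_empty by simp
    thus False using AB not_ordLess_ordLeq by blast
  qed
  moreover obtain h where "inj_on h B" "h ` B \<subseteq> Da" using card_of_ordLeq[of B Da] \<open>|B| \<le>o |Da|\<close> by blast
  ultimately have "Da \<noteq> {}" by blast
  then obtain b0 where b0: "b0 \<in> Da" by blast
  have "Mf b0 \<subseteq> A'" using gM[of b0] b0 DaB unfolding Da_def A'_def by auto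
  hence A'i: "infinite A'" using gM[of b0] b0 DaB finite_subset by blast
  have A'n: "nice A'" using An A'sub unfolding nice_def by blast
  have Das: "stable |Da|" by (rule stable_ordIso1[OF Bs DaIso])
  have "|A'| <o |B|" by (rule ordLess_transitive[OF A'A AB])
  hence A'Da: "|A'| <o |Da|" by (rule ordLess_ordIso_trans[OF _ ordIso_symmetric[OF DaIso]])
  have G': "inf_nbr_bigraph E' A' Da"
    unfolding inf_nbr_bigraph_def
  proof
    show "E' \<subseteq> A' \<times> Da" unfolding E'_def by blast
    show "\<forall>b\<in>Da. infinite {x \<in> A'. (x, b) \<in> E'}"
    proof
      fix b assume b: "b \<in> Da"
      have "Mf b \<subseteq> {x \<in> A'. (x, b) \<in> E'}" using gM[of b] b DaB unfolding E'_def Da_def A'_def by auto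
      thus "infinite {x \<in> A'. (x, b) \<in> E'}" using gM[of b] b DaB finite_subset by blast
    qed
  qed
  have "\<exists>C D F. C \<subseteq> A' \<and> D \<subseteq> Da \<and> F \<subseteq> E' \<and> |C| =o natLeq \<and> |D| =o |Da| \<and> inf_nbr_bigraph F C D"
    using IH[OF A'r] card_of_refl[of A'] A'i A'n Das A'Da G' by blast
  then obtain C D F where R: "C \<subseteq> A'" "D \<subseteq> Da" "F \<subseteq> E'" "|C| =o natLeq" "|D| =o |Da|" "inf_nbr_bigraph F C D" by blast
  have "|D| =o |B|" by (rule ordIso_transitive[OF R(5) DaIso])
  moreover have "C \<subseteq> A" "D \<subseteq> B" "F \<subseteq> E" using R A'sub DaB unfolding E'_def by blast+
  ultimately show ?thesis using R(4) R(6) by blast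
qed


lemma reg_main:
  fixes A :: "'a set" and B :: "'b set"
  assumes "infinite A" "nice A" "stable |B|" "|A| <o |B|" "inf_nbr_bigraph E A B"
  shows "\<exists>C D F. C \<subseteq> A \<and> D \<subseteq> B \<and> F \<subseteq> E \<and> |C| =o natLeq \<and> |D| =o |B| \<and> inf_nbr_bigraph F C D"
proof -
  have P: "\<forall>A::'a set. |A| =o r \<longrightarrow> (\<forall>(B::'b set) E. infinite A \<longrightarrow> nice A \<longrightarrow> stable |B| \<longrightarrow> |A| <o |B| \<longrightarrow> inf_nbr_bigraph E A B \<longrightarrow>
      (\<exists>C D F. C \<subseteq> A \<and> D \<subseteq> B \<and> F \<subseteq> E \<and> |C| =o natLeq \<and> |D| =o |B| \<and> inf_nbr_bigraph F C D))" for r :: "'a rel"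
  proof (induction r rule: wf_induct_rule[OF wf_ordLess])
    case (1 r)
    show ?case
    proof (intro allI impI)
      fix A :: "'a set" and B :: "'b set" and E
      assume h: "|A| =o r" "infinite A" "nice A" "stable |B|" "|A| <o |B|" "inf_nbr_bigraph E A B"
      show "\<exists>C D F. C \<subseteq> A \<and> D \<subseteq> B \<and> F \<subseteq> E \<and> |C| =o natLeq \<and> |D| =o |B| \<and> inf_nbr_bigraph F C D"
        by (rule reg_step[OF 1 h])
    qed
  qed
  have "|A| =o |A|" by (rule card_of_refl)
  thus ?thesis using P[of "|A|"] assms by blast
qed


theorem corollary4p2:
  fixes E :: "('a \<times> 'b) set" and A :: "'a set" and B :: "'b set"
  assumes "infinite A"
    and "|A| <o |B|"
    and "card_le_aleph_omega B"
    and "inf_nbr_bigraph E A B"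
  shows "\<exists>C D F. C \<subseteq> A \<and> D \<subseteq> B \<and> F \<subseteq> E \<and>
           |C| =o natLeq \<and> |D| =o |B| \<and> inf_nbr_bigraph F C D"
proof -
  note Ai = assms(1) and AB = assms(2) and G = assms(4)
  have ABle: "|A| \<le>o |B|" by (rule ordLess_imp_ordLeq[OF AB])
  show ?thesis
  proof (cases "\<exists>n. is_aleph n B")
    case True
    then obtain n where n: "is_aleph n B" by blast
    have Bs: "stable |B|" using aleph_basic[OF n] by blast
    have An: "nice A" by (rule nice_transfer[OF ABle nice_aleph[OF n]])
    show ?thesis by (rule reg_main[OF Ai An Bs AB G])
  next
    case False
    hence Bo: "is_aleph_omega B" using assms(3) unfolding card_le_aleph_omega_def by blast
    have c1: "\<forall>n. \<exists>D. D \<subseteq> B \<and> is_aleph n D" and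
         c2: "\<And>C. C \<subseteq> B \<Longrightarrow> |C| <o |B| \<Longrightarrow> \<exists>n D. D \<subseteq> B \<and> is_aleph n D \<and> |C| \<le>o |D|"
      using Bo unfolding is_aleph_omega_def by blast+
    obtain f where f: "inj_on f A" "f ` A \<subseteq> B" using card_of_ordLeq[of A B] ABle by blast
    have "bij_betw f A (f ` A)" using f(1) by (rule inj_on_imp_bij_betw)
    hence Af: "|A| =o |f ` A|" using card_of_ordIso[of A "f ` A"] by blast
    have "|f ` A| <o |B|" by (rule ordIso_ordLess_trans[OF ordIso_symmetric[OF Af] AB])
    then obtain n0 D0 where D0: "D0 \<subseteq> B" "is_aleph n0 D0" "|f ` A| \<le>o |D0|" using c2[OF f(2)] by blast
    have AD0: "|A| \<le>o |D0|" by (rule ordIso_ordLeq_trans[OF Af D0(3)])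
    have An: "nice A" by (rule nice_transfer[OF AD0 nice_aleph[OF D0(2)]])
    obtain Dn where Dn: "\<forall>n. Dn n \<subseteq> B \<and> is_aleph n (Dn n)" using choice[OF c1] by blast
    define good where "good n \<longleftrightarrow> |A| <o |Dn n|" for n
    have goodI: "good k" if "n0 < k" for k
    proof -
      have "|D0| <o |Dn k|" using aleph_less[OF D0(2) _ that] Dn by blast
      thus ?thesis unfolding good_def by (rule ordLeq_ordLess_trans[OF AD0])
    qed
    have ex: "\<forall>n. \<exists>C D F. good n \<longrightarrow> (C \<subseteq> A \<and> D \<subseteq> Dn n \<and> F \<subseteq> E \<and> |C| =o natLeq \<and> |D| =o |Dn n| \<and> inf_nbr_bigraph F C D)"
    proof
      fix n
      show "\<exists>C D F. good n \<longrightarrow> (C \<subseteq> A \<and> D \<subseteq> Dn n \<and> F \<subseteq> E \<and> |C| =o natLeq \<and> |D| =o |Dn n| \<and> inf_nbr_bigraph F C D)"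
      proof (cases "good n")
        case True
        have gn: "|A| <o |Dn n|" using True unfolding good_def .
        have Ds: "stable |Dn n|" using aleph_basic Dn by blast
        have DB: "Dn n \<subseteq> B" using Dn by blast
        have G': "inf_nbr_bigraph (E \<inter> (A \<times> Dn n)) A (Dn n)"
          unfolding inf_nbr_bigraph_def
        proof
          show "E \<inter> (A \<times> Dn n) \<subseteq> A \<times> Dn n" by blast
          show "\<forall>b\<in>Dn n. infinite {a \<in> A. (a, b) \<in> E \<inter> (A \<times> Dn n)}"
          proof
            fix b assume b: "b \<in> Dn n"
            hence "infinite {a \<in> A. (a, b) \<in> E}" using G DB unfolding inf_nbr_bigraph_def by blast
            moreover have "{a \<in> A. (a, b) \<in> E} = {a \<in> A. (a, b) \<in> E \<inter> (A \<times> Dn n)}" using b by blast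
            ultimately show "infinite {a \<in> A. (a, b) \<in> E \<inter> (A \<times> Dn n)}" by simp
          qed
        qed
        obtain C D F where R: "C \<subseteq> A" "D \<subseteq> Dn n" "F \<subseteq> E \<inter> (A \<times> Dn n)" "|C| =o natLeq" "|D| =o |Dn n|" "inf_nbr_bigraph F C D"
          using reg_main[OF Ai An Ds gn G'] by blast
        have "F \<subseteq> E" using R(3) by blast
        thus ?thesis using R by blast
      next
        case False
        thus ?thesis by blast
      qed
    qed
    obtain Cf where h1: "\<forall>n. \<exists>D F. good n \<longrightarrow> (Cf n \<subseteq> A \<and> D \<subseteq> Dn n \<and> F \<subseteq> E \<and> |Cf n| =o natLeq \<and> |D| =o |Dn n| \<and> inf_nbr_bigraph F (Cf n) D)"
      using choice[OF ex] by (elim exE) blast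
    obtain Df where h2: "\<forall>n. \<exists>F. good n \<longrightarrow> (Cf n \<subseteq> A \<and> Df n \<subseteq> Dn n \<and> F \<subseteq> E \<and> |Cf n| =o natLeq \<and> |Df n| =o |Dn n| \<and> inf_nbr_bigraph F (Cf n) (Df n))"
      using choice[OF h1] by (elim exE) blast
    obtain Ff where h3: "\<forall>n. good n \<longrightarrow> (Cf n \<subseteq> A \<and> Df n \<subseteq> Dn n \<and> Ff n \<subseteq> E \<and> |Cf n| =o natLeq \<and> |Df n| =o |Dn n| \<and> inf_nbr_bigraph (Ff n) (Cf n) (Df n))"
      using choice[OF h2] by (elim exE) blast
    define I where "I = {n. good n}"
    define C where "C = (\<Union>n\<in>I. Cf n)"
    define D where "D = (\<Union>n\<in>I. Df n)"
    define F where "F = (\<Union>n\<in>I. Ff n)"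
    have hI: "\<And>n. n \<in> I \<Longrightarrow> Cf n \<subseteq> A \<and> Df n \<subseteq> Dn n \<and> Ff n \<subseteq> E \<and> |Cf n| =o natLeq \<and> |Df n| =o |Dn n| \<and> inf_nbr_bigraph (Ff n) (Cf n) (Df n)"
      using h3 unfolding I_def by blast
    have k0: "Suc n0 \<in> I" unfolding I_def using goodI by simp
    have CA: "C \<subseteq> A" unfolding C_def using hI by blast
    have DB: "D \<subseteq> B" unfolding D_def using hI Dn by blast
    have FE: "F \<subseteq> E" unfolding F_def using hI by blast
    have cn: "|UNIV::nat set| =o natLeq" by (rule card_of_nat)
    have "|C| \<le>o |UNIV::nat set|" unfolding C_def
    proof (rule card_of_UNION_ordLeq_infinite)
      show "infinite (UNIV::nat set)" by simp
      show "|I| \<le>o |UNIV::nat set|" by (rule card_of_mono1) simp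
      show "\<forall>i\<in>I. |Cf i| \<le>o |UNIV::nat set|"
      proof
        fix i assume "i \<in> I"
        hence "|Cf i| =o natLeq" using hI by blast
        hence "|Cf i| =o |UNIV::nat set|" by (rule ordIso_transitive[OF _ ordIso_symmetric[OF cn]])
        thus "|Cf i| \<le>o |UNIV::nat set|" using ordIso_iff_ordLeq by blast
      qed
    qed
    hence Cle: "|C| \<le>o natLeq" by (rule ordLeq_ordIso_trans[OF _ cn])
    have "Cf (Suc n0) \<subseteq> C" unfolding C_def using k0 by blast
    moreover have "natLeq \<le>o |Cf (Suc n0)|" using hI[OF k0] ordIso_iff_ordLeq by blast
    ultimately have "natLeq \<le>o |C|" using ordLeq_transitive card_of_mono1 by blast
    hence Ciso: "|C| =o natLeq" using Cle ordIso_iff_ordLeq by blast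
    have GF: "inf_nbr_bigraph F C D"
      unfolding inf_nbr_bigraph_def
    proof
      show "F \<subseteq> C \<times> D" unfolding F_def C_def D_def using hI unfolding inf_nbr_bigraph_def by blast
      show "\<forall>b\<in>D. infinite {a \<in> C. (a, b) \<in> F}"
      proof
        fix b assume "b \<in> D"
        then obtain n where n: "n \<in> I" "b \<in> Df n" unfolding D_def by blast
        have "infinite {a \<in> Cf n. (a, b) \<in> Ff n}" using hI[OF n(1)] n(2) unfolding inf_nbr_bigraph_def by blast
        moreover have "{a \<in> Cf n. (a, b) \<in> Ff n} \<subseteq> {a \<in> C. (a, b) \<in> F}" unfolding C_def F_def using n(1) by blast
        ultimately show "infinite {a \<in> C. (a, b) \<in> F}" using finite_subset by blast
      qed
    qed
    have DleB: "|D| \<le>o |B|" by (rule card_of_mono1[OF DB])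
    have "\<not> |D| <o |B|"
    proof
      assume DlB: "|D| <o |B|"
      obtain m D' where D': "D' \<subseteq> B" "is_aleph m D'" "|D| \<le>o |D'|" using c2[OF DB DlB] by blast
      define k where "k = Suc (max m n0)"
      have kI: "k \<in> I" unfolding I_def k_def using goodI by simp
      have "|D'| <o |Dn k|" using aleph_less[OF D'(2), of k "Dn k"] Dn unfolding k_def by simp
      moreover have "|Dn k| =o |Df k|" using hI[OF kI] ordIso_symmetric by blast
      moreover have "|Df k| \<le>o |D|" unfolding D_def using kI by (intro card_of_mono1) blast
      ultimately have "|D'| <o |D|" using ordLess_ordIso_trans ordLess_ordLeq_trans by blast
      hence "|D| <o |D|" by (rule ordLeq_ordLess_trans[OF D'(3)])
      thus False using ordLess_irreflexive by blast
    qed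
    hence "|B| \<le>o |D|" using not_ordLess_iff_ordLeq card_of_Well_order by blast
    hence "|D| =o |B|" using DleB ordIso_iff_ordLeq by blast
    thus ?thesis using CA DB FE Ciso GF by blast
  qed
qed

end
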